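(* Let $\beta>0$, $0<\alpha<1$, and define $T\colon\mathbb R\to\mathbb R$ by $Tx=x-\beta$ if $x\le\beta$ and $Tx=\alpha(x-\beta)$ if $x>\beta$. Set $q(x):=\left\lceil\log_\alpha\frac{\beta}{\alpha\beta+(1-\alpha)x}\right\rceil$ for $x>\beta$. Then $\operatorname{Fix}T=\varnothing$, $v:=P_{\overline{\operatorname{ran}}(\mathrm{Id}-T)}0=\beta$, and for all $n\in\mathbb N$ and $x\in\mathbb R$: $(T_{-v})^nx=\alpha^n\max\{x,0\}+\min\{x,0\}$; $(v+T)^nx=\alpha^n\max\{x-\beta,0\}+\min\{x,\beta\}$; $T^nx+nv=x$ if $x\le\beta$; $=\alpha^nx-\frac{\alpha(1-\alpha^n)}{1-\alpha}\beta+n\beta$ if $x>\beta$ and $n<q(x)$; $=\alpha^{q(x)}x-\frac{\alpha(1-\alpha^{q(x)})}{1-\alpha}\beta+q(x)\beta$ if $x>\beta$ and $n\ge q(x)$. Consequently $\lim_n(T_{-v})^nx=\min\{x,0\}$, $\lim_n(v+T)^nx=\min\{x,\beta\}$, and $\lim_n(T^nx+nv)$ equals $x$ if $x\le\beta$ and $\alpha^{q(x)}x-\frac{\alpha(1-\alpha^{q(x)})}{1-\alpha}\beta+q(x)\beta$ if $x>\beta$. Moreover, there is no map $S\colon\mathbb R\to\mathbb R$ such that $S^nx=T^nx+nv$ for all $x\in\mathbb R$ and all $n\in\mathbb N$.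
   Context: $T_{-v}x:=T(x+v)$, $(v+T)x:=v+Tx$, $\operatorname{Fix}$ denotes the fixed point set, and $\overline{\operatorname{ran}}(\mathrm{Id}-T)$ is the closure of the range of $\mathrm{Id}-T$. *)

theory Defs
  imports "HOL-Analysis.Analysis"
begin

end

theory Submission imports Defs begin
lemma keyl:
  fixes a r :: real and k :: nat
  assumes "0<a" "a<1" "0<r"
  shows "r < a^k \<longleftrightarrow> real k < log a r"
proof -
  have la: "ln a < 0" using assms by simp
  have "r < a^k \<longleftrightarrow> ln r < ln (a^k)" using assms by simp
  also have "\<dots> \<longleftrightarrow> ln r < real k * ln a" using assms by (simp add: ln_realpow)
  also have "\<dots> \<longleftrightarrow> real k < ln r / ln a" using la by (simp add: neg_less_divide_eq)
  finally show ?thesis by (simp add: log_def)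
qed

lemma iter_le:
  fixes b :: real and T :: "real \<Rightarrow> real"
  assumes hb: "b > 0" and T: "\<And>x. x \<le> b \<Longrightarrow> T x = x - b"
  shows "y \<le> b \<Longrightarrow> (T ^^ n) y = y - real n * b"
proof (induction n)
  case 0 then show ?case by simp
next
  case (Suc n)
  have "real n * b \<ge> 0" using hb by simp
  then have "(T ^^ n) y \<le> b" using Suc by simp
  then show ?case using Suc by (simp add: T algebra_simps)
qed

lemma iter_gt:
  fixes a b x :: real and T :: "real \<Rightarrow> real"
  assumes hb: "b > 0" and "0<a" "a<1" and T: "\<And>x. x > b \<Longrightarrow> T x = a * (x - b)"
   and step: "\<And>k::nat. k < n \<Longrightarrow> a^k * x - a * (1 - a^k) / (1 - a) * b > b"
  shows "(T ^^ n) x = a^n * x - a * (1 - a^n) / (1 - a) * b"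
  using step
proof (induction n)
  case 0 then show ?case by simp
next
  case (Suc n)
  then have IH: "(T ^^ n) x = a^n * x - a * (1 - a^n) / (1 - a) * b" by simp
  have "(T ^^ n) x > b" using IH Suc.prems[of n] by simp
  then have "(T ^^ Suc n) x = a * ((T ^^ n) x - b)" by (simp add: T)
  also have "\<dots> = a^Suc n * x - a * (1 - a^Suc n) / (1 - a) * b"
    unfolding IH using assms(3) by (simp add: field_simps)
  finally show ?case .
qed
theorem mainTheorem7:
  fixes \<alpha> \<beta> v :: real and T :: "real \<Rightarrow> real" and q :: "real \<Rightarrow> int"
  assumes hb: "\<beta> > 0" and ha0: "0 < \<alpha>" and ha1: "\<alpha> < 1"
    and T_def: "T = (\<lambda>x. if x \<le> \<beta> then x - \<beta> else \<alpha> * (x - \<beta>))"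
    and q_def: "\<And>x. x > \<beta> \<Longrightarrow> q x = \<lceil>log \<alpha> (\<beta> / (\<alpha> * \<beta> + (1 - \<alpha>) * x))\<rceil>"
    and v_def: "v = closest_point (closure (range (\<lambda>x. x - T x))) 0"
  shows "{x. T x = x} = {}
    \<and> v = \<beta>
    \<and> (\<forall>n x. ((\<lambda>y. T (y + v)) ^^ n) x = \<alpha> ^ n * max x 0 + min x 0)
    \<and> (\<forall>n x. ((\<lambda>y. v + T y) ^^ n) x = \<alpha> ^ n * max (x - \<beta>) 0 + min x \<beta>)
    \<and> (\<forall>n x. x \<le> \<beta> \<longrightarrow> (T ^^ n) x + real n * v = x)
    \<and> (\<forall>n x. x > \<beta> \<and> int n < q x \<longrightarrow>
          (T ^^ n) x + real n * v = \<alpha> ^ n * x - \<alpha> * (1 - \<alpha> ^ n) / (1 - \<alpha>) * \<beta> + real n * \<beta>)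
    \<and> (\<forall>n x. x > \<beta> \<and> int n \<ge> q x \<longrightarrow>
          (T ^^ n) x + real n * v = \<alpha> powi q x * x - \<alpha> * (1 - \<alpha> powi q x) / (1 - \<alpha>) * \<beta>
             + real_of_int (q x) * \<beta>)
    \<and> (\<forall>x. (\<lambda>n. ((\<lambda>y. T (y + v)) ^^ n) x) \<longlonglongrightarrow> min x 0)
    \<and> (\<forall>x. (\<lambda>n. ((\<lambda>y. v + T y) ^^ n) x) \<longlonglongrightarrow> min x \<beta>)
    \<and> (\<forall>x. x \<le> \<beta> \<longrightarrow> (\<lambda>n. (T ^^ n) x + real n * v) \<longlonglongrightarrow> x)
    \<and> (\<forall>x. x > \<beta> \<longrightarrow> (\<lambda>n. (T ^^ n) x + real n * v) \<longlonglongrightarrow>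
          \<alpha> powi q x * x - \<alpha> * (1 - \<alpha> powi q x) / (1 - \<alpha>) * \<beta> + real_of_int (q x) * \<beta>)
    \<and> \<not> (\<exists>S :: real \<Rightarrow> real. \<forall>x n. (S ^^ n) x = (T ^^ n) x + real n * v)"
proof -
  have Tle: "\<And>x. x \<le> \<beta> \<Longrightarrow> T x = x - \<beta>" using T_def by simp
  have Tgt: "\<And>x. x > \<beta> \<Longrightarrow> T x = \<alpha> * (x - \<beta>)" using T_def by simp
  have fixT: "{x. T x = x} = {}"
  proof (rule ccontr)
    assume "{x. T x = x} \<noteq> {}"
    then obtain x where x: "T x = x" by blast
    show False
    proof (cases "x \<le> \<beta>")
      case True then show False using x Tle hb by simp
    next
      case False
      then have "\<alpha> * (x - \<beta>) = x" using x Tgt by simp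
      then have "x * (1 - \<alpha>) = - \<alpha> * \<beta>" by (simp add: algebra_simps)
      moreover have "x * (1 - \<alpha>) > 0" using False hb ha1 by simp
      moreover have "- \<alpha> * \<beta> < 0" using ha0 hb by simp
      ultimately show False by linarith
    qed
  qed
  have rng: "range (\<lambda>x. x - T x) = {\<beta>..}"
  proof
    show "range (\<lambda>x. x - T x) \<subseteq> {\<beta>..}"
    proof clarify
      fix x
      show "\<beta> \<le> x - T x"
      proof (cases "x \<le> \<beta>")
        case True then show ?thesis using Tle by simp
      next
        case False
        then have "x - T x = (1 - \<alpha>) * x + \<alpha> * \<beta>" using Tgt by (simp add: algebra_simps)
        moreover have "(1 - \<alpha>) * x \<ge> (1 - \<alpha>) * \<beta>" using False ha1 by simp
        ultimately show ?thesis by (simp add: algebra_simps)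
      qed
    qed
  next
    show "{\<beta>..} \<subseteq> range (\<lambda>x. x - T x)"
    proof
      fix y assume y: "y \<in> {\<beta>..}"
      show "y \<in> range (\<lambda>x. x - T x)"
      proof (cases "y = \<beta>")
        case True
        then have "y = 0 - T 0" using Tle hb by simp
        then show ?thesis by blast
      next
        case False
        then have y': "y > \<beta>" using y by simp
        define z where "z = (y - \<alpha> * \<beta>) / (1 - \<alpha>)"
        have z1: "z * (1 - \<alpha>) = y - \<alpha> * \<beta>" using ha1 unfolding z_def by simp
        have "z * (1 - \<alpha>) > \<beta> * (1 - \<alpha>)" using z1 y' by (simp add: algebra_simps)
        then have "z > \<beta>" using ha1 by simp
        then have "T z = \<alpha> * (z - \<beta>)" using Tgt by simp
        then have "z - T z = y" using z1 by (simp add: algebra_simps)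
        then show ?thesis by (metis rangeI)
      qed
    qed
  qed
  have vb: "v = \<beta>"
  proof -
    have "closure (range (\<lambda>x. x - T x)) = {\<beta>..}" using rng by simp
    moreover have "\<beta> = closest_point {\<beta>..} 0"
      by (rule closest_point_unique) (use hb in \<open>auto simp: dist_real_def\<close>)
    ultimately show ?thesis using v_def by simp
  qed
  have it1: "\<And>n x. ((\<lambda>y. T (y + v)) ^^ n) x = \<alpha> ^ n * max x 0 + min x 0"
  proof -
    fix n x
    show "((\<lambda>y. T (y + v)) ^^ n) x = \<alpha> ^ n * max x 0 + min x 0"
    proof (induction n)
      case 0 then show ?case by simp
    next
      case (Suc n)
      show ?case
      proof (cases "x \<le> 0")
        case True then show ?thesis using Suc Tle vb by simp
      next
        case False
        have "\<alpha> ^ n * x > 0" using False ha0 by simp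
        then show ?thesis using Suc Tgt vb False by simp
      qed
    qed
  qed
  have it2: "\<And>n x. ((\<lambda>y. v + T y) ^^ n) x = \<alpha> ^ n * max (x - \<beta>) 0 + min x \<beta>"
  proof -
    fix n x
    show "((\<lambda>y. v + T y) ^^ n) x = \<alpha> ^ n * max (x - \<beta>) 0 + min x \<beta>"
    proof (induction n)
      case 0 then show ?case by simp
    next
      case (Suc n)
      show ?case
      proof (cases "x \<le> \<beta>")
        case True then show ?thesis using Suc Tle vb by simp
      next
        case False
        have "\<alpha> ^ n * (x - \<beta>) > 0" using False ha0 by simp
        then have y: "((\<lambda>y. v + T y) ^^ n) x = \<beta> + \<alpha> ^ n * (x - \<beta>)" using Suc False by simp
        have "T (\<beta> + \<alpha> ^ n * (x - \<beta>)) = \<alpha> * (\<alpha> ^ n * (x - \<beta>))"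
          using Tgt[of "\<beta> + \<alpha> ^ n * (x - \<beta>)"] \<open>\<alpha> ^ n * (x - \<beta>) > 0\<close> by simp
        then show ?thesis using y vb False by simp
      qed
    qed
  qed
  have it3: "\<And>n x. x \<le> \<beta> \<Longrightarrow> (T ^^ n) x + real n * v = x"
    using iter_le[OF hb Tle] vb by simp
  define f where "f x k = \<alpha>^k * x - \<alpha> * (1 - \<alpha>^k) / (1 - \<alpha>) * \<beta>" for x and k :: nat
  have key: "\<And>x k. x > \<beta> \<Longrightarrow> (f x k > \<beta> \<longleftrightarrow> int k < q x)"
  proof -
    fix x k assume x: "x > \<beta>"
    define D where "D = \<alpha> * \<beta> + (1 - \<alpha>) * x"
    have "(1 - \<alpha>) * x > (1 - \<alpha>) * \<beta>" using x ha1 by simp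
    then have D: "D > \<beta>" unfolding D_def by (simp add: algebra_simps)
    have "f x k > \<beta> \<longleftrightarrow> f x k * (1 - \<alpha>) > \<beta> * (1 - \<alpha>)" using ha1 by simp
    also have "f x k * (1 - \<alpha>) = \<alpha>^k * D - \<alpha> * \<beta>"
      unfolding f_def D_def using ha1 by (simp add: field_simps)
    also have "\<alpha>^k * D - \<alpha> * \<beta> > \<beta> * (1 - \<alpha>) \<longleftrightarrow> \<beta> < \<alpha>^k * D" by (simp add: algebra_simps)
    also have "\<dots> \<longleftrightarrow> \<beta> / D < \<alpha>^k" using D hb by (simp add: pos_divide_less_eq)
    also have "\<dots> \<longleftrightarrow> real k < log \<alpha> (\<beta> / D)" using keyl[OF ha0 ha1] D hb by simp
    also have "\<dots> \<longleftrightarrow> int k < q x" using q_def[OF x] unfolding D_def by (simp add: less_ceiling_iff)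
    finally show "f x k > \<beta> \<longleftrightarrow> int k < q x" .
  qed
  have it4: "\<And>n x. x > \<beta> \<Longrightarrow> int n < q x \<Longrightarrow> (T ^^ n) x = f x n"
    unfolding f_def by (rule iter_gt[OF hb ha0 ha1 Tgt]) (use key f_def in auto)
  have qpos: "\<And>x. x > \<beta> \<Longrightarrow> q x \<ge> 0"
    using key[of _ 0] hb unfolding f_def by fastforce
  have it5: "\<And>n x. x > \<beta> \<Longrightarrow> int n \<ge> q x \<Longrightarrow> (T ^^ n) x + real n * v = f x (nat (q x)) + real_of_int (q x) * \<beta>"
  proof -
    fix n x assume x: "x > \<beta>" and n: "int n \<ge> q x"
    define Q where "Q = nat (q x)"
    have qQ: "q x = int Q" using qpos[OF x] unfolding Q_def by simp
    have Qn: "Q \<le> n" using n qQ by simp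
    have TQ: "(T ^^ Q) x = f x Q"
      unfolding f_def by (rule iter_gt[OF hb ha0 ha1 Tgt]) (use key[OF x] qQ f_def in auto)
    have fQ: "f x Q \<le> \<beta>" using key[OF x, of Q] qQ by simp
    have "(T ^^ n) x = (T ^^ (n - Q)) ((T ^^ Q) x)"
      using Qn by (metis funpow_add le_add_diff_inverse2 o_apply)
    also have "\<dots> = f x Q - real (n - Q) * \<beta>" using TQ iter_le[OF hb Tle fQ] by simp
    finally show "(T ^^ n) x + real n * v = f x (nat (q x)) + real_of_int (q x) * \<beta>"
      using vb Qn qQ unfolding Q_def by (simp add: of_nat_diff algebra_simps)
  qed
  have powq: "\<And>x. x > \<beta> \<Longrightarrow> \<alpha> powi q x = \<alpha> ^ nat (q x)"
    using qpos by (metis nat_0_le power_int_of_nat)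
  have it5': "\<And>n x. x > \<beta> \<and> int n \<ge> q x \<longrightarrow>
          (T ^^ n) x + real n * v = \<alpha> powi q x * x - \<alpha> * (1 - \<alpha> powi q x) / (1 - \<alpha>) * \<beta>
             + real_of_int (q x) * \<beta>"
    using it5 powq unfolding f_def by simp
  have it4': "\<And>n x. x > \<beta> \<and> int n < q x \<longrightarrow>
          (T ^^ n) x + real n * v = \<alpha> ^ n * x - \<alpha> * (1 - \<alpha> ^ n) / (1 - \<alpha>) * \<beta> + real n * \<beta>"
    using it4 vb unfolding f_def by simp
  have pz: "(\<lambda>n. \<alpha> ^ n) \<longlonglongrightarrow> 0" using ha0 ha1 by (intro LIMSEQ_power_zero) simp
  have l1: "\<And>x. (\<lambda>n. ((\<lambda>y. T (y + v)) ^^ n) x) \<longlonglongrightarrow> min x 0"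
    unfolding it1 using tendsto_add[OF tendsto_mult[OF pz tendsto_const] tendsto_const] by simp
  have l2: "\<And>x. (\<lambda>n. ((\<lambda>y. v + T y) ^^ n) x) \<longlonglongrightarrow> min x \<beta>"
    unfolding it2 using tendsto_add[OF tendsto_mult[OF pz tendsto_const] tendsto_const] by simp
  have l3: "\<And>x. x \<le> \<beta> \<longrightarrow> (\<lambda>n. (T ^^ n) x + real n * v) \<longlonglongrightarrow> x"
    using it3 by simp
  have l4: "\<And>x. x > \<beta> \<longrightarrow> (\<lambda>n. (T ^^ n) x + real n * v) \<longlonglongrightarrow>
          \<alpha> powi q x * x - \<alpha> * (1 - \<alpha> powi q x) / (1 - \<alpha>) * \<beta> + real_of_int (q x) * \<beta>"
  proof
    fix x assume x: "x > \<beta>"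
    show "(\<lambda>n. (T ^^ n) x + real n * v) \<longlonglongrightarrow>
          \<alpha> powi q x * x - \<alpha> * (1 - \<alpha> powi q x) / (1 - \<alpha>) * \<beta> + real_of_int (q x) * \<beta>"
    proof (rule tendsto_eventually)
      show "\<forall>\<^sub>F n in sequentially. (T ^^ n) x + real n * v =
          \<alpha> powi q x * x - \<alpha> * (1 - \<alpha> powi q x) / (1 - \<alpha>) * \<beta> + real_of_int (q x) * \<beta>"
        unfolding eventually_sequentially using it5' x
        by (metis nat_le_iff qpos[OF x])
    qed
  qed
  have noS: "\<not> (\<exists>S :: real \<Rightarrow> real. \<forall>x n. (S ^^ n) x = (T ^^ n) x + real n * v)"
  proof
    assume "\<exists>S :: real \<Rightarrow> real. \<forall>x n. (S ^^ n) x = (T ^^ n) x + real n * v"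
    then obtain S :: "real \<Rightarrow> real" where S: "\<And>x n. (S ^^ n) x = (T ^^ n) x + real n * v" by blast
    define x where "x = \<beta> + 2 * \<beta> / \<alpha>"
    have x1: "x > \<beta>" using hb ha0 unfolding x_def by simp
    have Tx: "T x = 2 * \<beta>" using Tgt[OF x1] ha0 unfolding x_def by (simp add: field_simps)
    have T2x: "T (T x) = \<alpha> * \<beta>" using Tx Tgt hb by simp
    have T3: "T (3 * \<beta>) = 2 * \<alpha> * \<beta>" using Tgt hb by simp
    have S1: "S x = 3 * \<beta>" using S[of 1 x] Tx vb by simp
    have S1': "S (3*\<beta>) = 2 * \<alpha> * \<beta> + \<beta>" using S[of 1 "3*\<beta>"] T3 vb by simp
    have S2: "(S ^^ 2) x = \<alpha> * \<beta> + 2 * \<beta>" using S[of 2 x] T2x vb by (simp add: numeral_2_eq_2)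
    have "(S ^^ 2) x = S (S x)" by (simp add: numeral_2_eq_2)
    then have "\<alpha> * \<beta> + 2 * \<beta> = 2 * \<alpha> * \<beta> + \<beta>" using S1 S1' S2 by simp
    then have "\<beta> * (1 - \<alpha>) = 0" by (simp add: algebra_simps)
    then show False using hb ha1 by simp
  qed
  show ?thesis using fixT vb it1 it2 it3 it4' it5' l1 l2 l3 l4 noS by blast
qed
end
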